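(* Suppose a torsion-free group $G$ acts on a simplicial tree $T$ with trivial edge stabilizers, $\Phi\in\mathrm{Aut}(G)$, and $t\colon T\to T$ is a $\Phi$-equivariant isometry, i.e. $t(g x)=\Phi(g)t(x)$ for all $x\in T$, $g\in G$. Assume that $t$ preserves the $G$-orbits of oriented edges, and that whenever $v$ is a vertex of $T$ with $t(v)=v$, the restriction $\Phi|_V\colon V\to V$ is neat, where $V=\mathrm{Stab}(v)$. Then $\Phi$ is neat.
   Context: An automorphism $\Psi$ of a group $H$ is neat if $\Psi^k(h)=h$ for some $k\neq 0$ and $h\in H$ implies $\Psi(h)=h$. "$t$ preserves the $G$-orbits of oriented edges" means that for every oriented edge $e$, $t(e)\in G\cdot e$ (with orientation). *)

theory Defs
  imports "HOL-Algebra.Algebra"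
begin

definition is_cycle :: "('v \<Rightarrow> 'v \<Rightarrow> bool) \<Rightarrow> 'v list \<Rightarrow> bool" where
  "is_cycle E vs \<longleftrightarrow> length vs \<ge> 3 \<and> distinct vs
     \<and> (\<forall>i. Suc i < length vs \<longrightarrow> E (vs ! i) (vs ! Suc i))
     \<and> E (last vs) (hd vs)"

definition simplicial_tree :: "('v \<Rightarrow> 'v \<Rightarrow> bool) \<Rightarrow> bool" where
  "simplicial_tree E \<longleftrightarrow> (\<forall>u v. E u v \<longrightarrow> E v u) \<and> (\<forall>v. \<not> E v v)
     \<and> (\<forall>u v. E\<^sup>*\<^sup>* u v) \<and> (\<forall>vs. \<not> is_cycle E vs)"

definition tree_isometry :: "('v \<Rightarrow> 'v \<Rightarrow> bool) \<Rightarrow> ('v \<Rightarrow> 'v) \<Rightarrow> bool" where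
  "tree_isometry E t \<longleftrightarrow> bij t \<and> (\<forall>u v. E u v \<longleftrightarrow> E (t u) (t v))"

definition torsion_free :: "('g, 'b) monoid_scheme \<Rightarrow> bool" where
  "torsion_free G \<longleftrightarrow> (\<forall>g\<in>carrier G. \<forall>n::nat. n > 0 \<and> g [^]\<^bsub>G\<^esub> n = \<one>\<^bsub>G\<^esub> \<longrightarrow> g = \<one>\<^bsub>G\<^esub>)"

definition trivial_edge_stabilizers ::
  "('g, 'b) monoid_scheme \<Rightarrow> ('g \<Rightarrow> 'v \<Rightarrow> 'v) \<Rightarrow> ('v \<Rightarrow> 'v \<Rightarrow> bool) \<Rightarrow> bool" where
  "trivial_edge_stabilizers G act E \<longleftrightarrow>
     (\<forall>u v. E u v \<longrightarrow> {g \<in> carrier G. {act g u, act g v} = {u, v}} = {\<one>\<^bsub>G\<^esub>})"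

definition aut_pow :: "('g, 'b) monoid_scheme \<Rightarrow> ('g \<Rightarrow> 'g) \<Rightarrow> int \<Rightarrow> 'g \<Rightarrow> 'g" where
  "aut_pow G Phi k = (if k \<ge> 0 then Phi ^^ nat k else (inv_into (carrier G) Phi) ^^ nat (- k))"

definition neat :: "('g, 'b) monoid_scheme \<Rightarrow> ('g \<Rightarrow> 'g) \<Rightarrow> bool" where
  "neat G Phi \<longleftrightarrow> (\<forall>h\<in>carrier G. \<forall>k::int. k \<noteq> 0 \<and> aut_pow G Phi k h = h \<longrightarrow> Phi h = h)"

end

theory Submission
  imports Defs
begin


locale stree =
  fixes E :: "'v \<Rightarrow> 'v \<Rightarrow> bool"
  assumes st: "simplicial_tree E"
begin

lemma symE: "E u v \<Longrightarrow> E v u" using st unfolding simplicial_tree_def by blast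
lemma irrE: "\<not> E v v" using st unfolding simplicial_tree_def by blast
lemma connE: "E\<^sup>*\<^sup>* u v" using st unfolding simplicial_tree_def by blast
lemma nocyc: "\<not> is_cycle E vs" using st unfolding simplicial_tree_def by blast

definition dist :: "'v \<Rightarrow> 'v \<Rightarrow> nat" where
  "dist u v = (LEAST n. (E ^^ n) u v)"

lemma ex_pow: "\<exists>n. (E ^^ n) u v" using connE rtranclp_imp_relpowp by metis

lemma dist_pow: "(E ^^ dist u v) u v"
  unfolding dist_def using ex_pow by (rule LeastI_ex)

lemma dist_le: "(E ^^ n) u v \<Longrightarrow> dist u v \<le> n"
  unfolding dist_def by (rule Least_le)

lemma dist_self[simp]: "dist u u = 0"
  using dist_le[of 0 u u] by simp

lemma dist_0_iff: "dist u v = 0 \<longleftrightarrow> u = v"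
  using dist_pow[of u v] by (cases "dist u v") auto

lemma pow_sym: "(E ^^ n) u v \<Longrightarrow> (E ^^ n) v u"
proof (induction n arbitrary: u v)
  case 0 then show ?case by simp
next
  case (Suc n)
  then obtain y where "(E ^^ n) u y" "E y v" by auto
  then have "(E ^^ n) y u" "E v y" using Suc.IH symE by auto
  then show ?case using relpowp_Suc_I2 by metis
qed

lemma dist_sym: "dist u v = dist v u"
  by (meson antisym dist_le dist_pow pow_sym)

lemma dist_tri: "dist u w \<le> dist u v + dist v w"
proof -
  have "(E ^^ (dist u v + dist v w)) u w"
    using dist_pow[of u v] dist_pow[of v w] unfolding relpowp_add by blast
  then show ?thesis by (rule dist_le)
qed

lemma dist_edge: "E u v \<Longrightarrow> dist u v = 1"
proof -
  assume e: "E u v"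
  have "(E ^^ 1) u v" using e by auto
  then have "dist u v \<le> 1" by (rule dist_le)
  moreover have "dist u v \<noteq> 0" using e irrE dist_0_iff by metis
  ultimately show ?thesis by simp
qed

lemma dist_edge_le: "E u v \<Longrightarrow> dist u r \<le> dist v r + 1"
  using dist_tri[of u r v] dist_edge by simp

lemma parent_ex: "u \<noteq> r \<Longrightarrow> \<exists>y. E u y \<and> dist y r + 1 = dist u r"
proof -
  assume "u \<noteq> r"
  then obtain m where m: "dist u r = Suc m" using dist_0_iff by (cases "dist u r") auto
  then obtain y where y: "E u y" "(E ^^ m) y r" using dist_pow[of u r] relpowp_Suc_D2 by metis
  have "dist y r \<le> m" using y(2) by (rule dist_le)
  moreover have "dist u r \<le> dist y r + 1" using dist_edge_le y(1) by blast
  ultimately show ?thesis using y m by auto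
qed

definition par :: "'v \<Rightarrow> 'v \<Rightarrow> 'v" where
  "par r u = (SOME y. E u y \<and> dist y r + 1 = dist u r)"

lemma par: "u \<noteq> r \<Longrightarrow> E u (par r u) \<and> dist (par r u) r + 1 = dist u r"
  unfolding par_def using parent_ex by (rule someI_ex)

lemma par_iter:
  "i \<le> dist u r \<Longrightarrow> dist ((par r ^^ i) u) r + i = dist u r"
proof (induction i)
  case 0 then show ?case by simp
next
  case (Suc i)
  then have h: "dist ((par r ^^ i) u) r + i = dist u r" by simp
  then have "(par r ^^ i) u \<noteq> r" using Suc.prems dist_0_iff by force
  then have "dist (par r ((par r ^^ i) u)) r + 1 = dist ((par r ^^ i) u) r" using par by blast
  then show ?case using h by simp
qed

lemma par_iter_edge:
  "i < dist u r \<Longrightarrow> E ((par r ^^ i) u) ((par r ^^ Suc i) u)"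
proof -
  assume a: "i < dist u r"
  then have "dist ((par r ^^ i) u) r + i = dist u r" using par_iter by simp
  then have "(par r ^^ i) u \<noteq> r" using a dist_0_iff by force
  then show ?thesis using par by simp
qed

lemma cycle_from_fun:
  assumes "M \<ge> 3" "inj_on F {..<M}" "\<And>i. Suc i < M \<Longrightarrow> E (F i) (F (Suc i))"
    "E (F (M - 1)) (F 0)"
  shows False
proof -
  have "is_cycle E (map F [0..<M])"
    unfolding is_cycle_def using assms
    by (auto simp: distinct_map hd_map last_map atLeast0LessThan)
  then show False using nocyc by blast
qed

lemma par_iter_r: "(par r ^^ dist u r) u = r"
  using par_iter[of "dist u r" u r] dist_0_iff by simp

lemma two_paths_meet:
  fixes PX PY :: "nat \<Rightarrow> 'v"
  assumes "PX n = PY n" "PX 0 \<noteq> PY 0"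
  obtains j where "j \<le> n" "0 < j" "PX j = PY j" "\<And>i. i < j \<Longrightarrow> PX i \<noteq> PY i"
proof -
  let ?j = "LEAST i. PX i = PY i"
  have "PX ?j = PY ?j" using assms(1) by (rule LeastI)
  moreover have "?j \<le> n" using assms(1) by (rule Least_le)
  moreover have "\<And>i. i < ?j \<Longrightarrow> PX i \<noteq> PY i" using not_less_Least by blast
  moreover have "?j \<noteq> 0" using calculation(1) assms(2) by (metis)
  ultimately show ?thesis using that by blast
qed

lemma edge_dist_neq: "E x y \<Longrightarrow> dist x r \<noteq> dist y r"
proof
  assume e: "E x y" and eq: "dist x r = dist y r"
  define n where "n = dist x r"
  define PX where "PX i = (par r ^^ i) x" for i
  define PY where "PY i = (par r ^^ i) y" for i
  have lx: "i \<le> n \<Longrightarrow> dist (PX i) r = n - i" for i using par_iter[of i x r] unfolding PX_def n_def by simp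
  have ly: "i \<le> n \<Longrightarrow> dist (PY i) r = n - i" for i using par_iter[of i y r] eq unfolding PY_def n_def by simp
  have ex: "i < n \<Longrightarrow> E (PX i) (PX (Suc i))" for i using par_iter_edge[of i x r] unfolding PX_def n_def by simp
  have ey: "i < n \<Longrightarrow> E (PY i) (PY (Suc i))" for i using par_iter_edge[of i y r] eq unfolding PY_def n_def by simp
  have "PX n = PY n" using par_iter_r[of x r] par_iter_r[of y r] eq unfolding PX_def PY_def n_def by simp
  moreover have "PX 0 \<noteq> PY 0" using e irrE unfolding PX_def PY_def by auto
  ultimately obtain j where j: "j \<le> n" "0 < j" "PX j = PY j" "\<And>i. i < j \<Longrightarrow> PX i \<noteq> PY i"
    using two_paths_meet[of PX n PY] by blast
  define F where "F i = (if i \<le> j then PX i else PY (2*j - i))" for i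
  have lev: "i < 2*j+1 \<Longrightarrow> dist (F i) r = (if i \<le> j then n - i else n - (2*j - i))" for i
    unfolding F_def using lx ly j(1) by auto
  show False
  proof (rule cycle_from_fun[of "2*j+1" F])
    show "3 \<le> 2*j+1" using j by simp
    show "inj_on F {..<2*j+1}"
    proof (rule inj_onI)
      fix a b assume a: "a \<in> {..<2*j+1}" and b: "b \<in> {..<2*j+1}" and fab: "F a = F b"
      have "dist (F a) r = dist (F b) r" using fab by simp
      then have l: "(if a \<le> j then n - a else n - (2*j - a)) = (if b \<le> j then n - b else n - (2*j - b))"
        using lev a b by simp
      show "a = b"
      proof (cases "a \<le> j")
        case True
        show ?thesis
        proof (cases "b \<le> j")
          case True then show ?thesis using \<open>a \<le> j\<close> l j(1) by auto
        next
          case False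
          then have "a = 2*j - b" using True l j(1) b by auto
          then have "PX a = PY a" using fab True False unfolding F_def by simp
          moreover have "a < j" using \<open>a = 2*j - b\<close> False b by simp
          ultimately show ?thesis using j(4) by blast
        qed
      next
        case False
        show ?thesis
        proof (cases "b \<le> j")
          case True
          then have "b = 2*j - a" using False l j(1) a by auto
          then have "PX b = PY b" using fab True False unfolding F_def by simp
          moreover have "b < j" using \<open>b = 2*j - a\<close> False a by simp
          ultimately show ?thesis using j(4) by blast
        next
          case True2: False
          then show ?thesis using False l j(1) a b by auto
        qed
      qed
    qed
    show "E (F i) (F (Suc i))" if "Suc i < 2*j+1" for i
    proof -
      consider "Suc i \<le> j" | "i = j" | "j < i" by linarith
      then show ?thesis
      proof cases
        case 1 then show ?thesis unfolding F_def using ex j(1) by auto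
      next
        case 2
        have "E (PY (j - 1)) (PY (Suc (j - 1)))" using ey[of "j-1"] j by simp
        then have "E (PY j) (PY (j - 1))" using j(2) symE by simp
        then show ?thesis unfolding F_def using 2 j(3) by (simp add: numeral_2_eq_2)
      next
        case 3
        define k where "k = 2*j - i - 1"
        have k: "2*j - i = Suc k" "2*j - Suc i = k" using 3 that unfolding k_def by auto
        have "E (PY k) (PY (Suc k))" using ey k j that 3 by simp
        then show ?thesis unfolding F_def using 3 k symE by simp
      qed
    qed
    show "E (F (2*j+1 - 1)) (F 0)" unfolding F_def using e symE j(2) by (simp add: PX_def PY_def)
  qed
qed

lemma edge_dist: "E x y \<Longrightarrow> dist x r = dist y r + 1 \<or> dist y r = dist x r + 1"
  using edge_dist_neq[of x y r] dist_edge_le[of x y r] dist_edge_le[of y x r] symE by force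

lemma par_unique:
  assumes "E x y" "E x z" "dist y r + 1 = dist x r" "dist z r + 1 = dist x r"
  shows "y = z"
proof (rule ccontr)
  assume yz: "y \<noteq> z"
  define n where "n = dist y r"
  define PY where "PY i = (par r ^^ i) y" for i
  define PZ where "PZ i = (par r ^^ i) z" for i
  have eq: "dist z r = n" using assms unfolding n_def by simp
  have ly: "i \<le> n \<Longrightarrow> dist (PY i) r = n - i" for i using par_iter[of i y r] unfolding PY_def n_def by simp
  have lz: "i \<le> n \<Longrightarrow> dist (PZ i) r = n - i" for i using par_iter[of i z r] eq unfolding PZ_def by simp
  have ey: "i < n \<Longrightarrow> E (PY i) (PY (Suc i))" for i using par_iter_edge[of i y r] unfolding PY_def n_def by simp
  have ez: "i < n \<Longrightarrow> E (PZ i) (PZ (Suc i))" for i using par_iter_edge[of i z r] eq unfolding PZ_def by simp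
  have "PY n = PZ n" using par_iter_r[of y r] par_iter_r[of z r] eq unfolding PY_def PZ_def n_def by simp
  moreover have "PY 0 \<noteq> PZ 0" using yz unfolding PY_def PZ_def by auto
  ultimately obtain j where j: "j \<le> n" "0 < j" "PY j = PZ j" "\<And>i. i < j \<Longrightarrow> PY i \<noteq> PZ i"
    using two_paths_meet[of PY n PZ] by blast
  define F where "F i = (if i \<le> j then PY i else if i \<le> 2*j then PZ (2*j - i) else x)" for i
  have lev: "i < 2*j+2 \<Longrightarrow> dist (F i) r = (if i \<le> j then n - i else if i \<le> 2*j then n - (2*j - i) else n + 1)" for i
    unfolding F_def using ly lz j(1) assms(3) n_def by auto
  show False
  proof (rule cycle_from_fun[of "2*j+2" F])
    show "3 \<le> 2*j+2" using j by simp
    show "inj_on F {..<2*j+2}"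
    proof (rule inj_onI)
      fix a b assume a: "a \<in> {..<2*j+2}" and b: "b \<in> {..<2*j+2}" and fab: "F a = F b"
      have "dist (F a) r = dist (F b) r" using fab by simp
      then have l: "(if a \<le> j then n - a else if a \<le> 2*j then n - (2*j - a) else n + 1) =
          (if b \<le> j then n - b else if b \<le> 2*j then n - (2*j - b) else n + 1)"
        using lev a b by simp
      have c1: False if "a' \<le> j" "j < b'" "b' \<le> 2*j" "F a' = F b'" for a' b'
      proof -
        have "dist (F a') r = dist (F b') r" using that by simp
        then have "n - a' = n - (2*j - b')" using lev[of a'] lev[of b'] that by simp
        then have "a' = 2*j - b'" using that j(1) by simp
        then have "a' < j" using that by simp
        moreover have "PY a' = PZ a'" using that \<open>a' = 2*j - b'\<close> unfolding F_def by simp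
        ultimately show False using j(4) by blast
      qed
      have c3: False if "a' < 2*j+1" "b' = 2*j+1" "F a' = F b'" for a' b'
      proof -
        have "dist (F a') r = dist (F b') r" using that by simp
        then show False using lev[of a'] lev[of b'] that by (auto split: if_splits)
      qed
      show "a = b"
      proof -
        consider "a \<le> j" "b \<le> j" | "a \<le> j" "j < b" "b \<le> 2*j" | "j < a" "a \<le> 2*j" "b \<le> j"
          | "j < a" "a \<le> 2*j" "j < b" "b \<le> 2*j" | "a = 2*j+1" | "b = 2*j+1" using a b by fastforce
        then show ?thesis
        proof cases
          case 1 then show ?thesis using l j(1) by auto
        next
          case 2 then show ?thesis using c1 fab by blast
        next
          case 3 then show ?thesis using c1 fab by metis
        next
          case 4 then show ?thesis using l j(1) by auto
        next
          case 5 then show ?thesis using c3[of b a] fab b by (cases "b = 2*j+1") auto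
        next
          case 6 then show ?thesis using c3[of a b] fab a by (cases "a = 2*j+1") auto
        qed
      qed
    qed
    show "E (F i) (F (Suc i))" if si: "Suc i < 2*j+2" for i
    proof -
      consider "Suc i \<le> j" | "i = j" | "j < i" "i < 2*j" | "i = 2*j" using si by linarith
      then show ?thesis
      proof cases
        case 1 then show ?thesis unfolding F_def using ey j(1) by auto
      next
        case 2
        have "E (PZ (j - 1)) (PZ (Suc (j - 1)))" using ez[of "j-1"] j by simp
        then have "E (PZ j) (PZ (j - 1))" using j(2) symE by simp
        then show ?thesis unfolding F_def using 2 j(2,3) by (simp add: numeral_2_eq_2)
      next
        case 3
        define k where "k = 2*j - i - 1"
        have k: "2*j - i = Suc k" "2*j - Suc i = k" using 3 that unfolding k_def by auto
        have "E (PZ k) (PZ (Suc k))" using ez k j that 3 by simp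
        then show ?thesis unfolding F_def using 3 k symE by simp
      next
        case 4 then show ?thesis unfolding F_def PZ_def using assms(2) symE j(2) by simp
      qed
    qed
    show "E (F (2*j+2 - 1)) (F 0)" unfolding F_def using assms(1) by (simp add: PY_def)
  qed
qed

lemma par_eq: "E x y \<Longrightarrow> dist y r < dist x r \<Longrightarrow> par r x = y"
proof -
  assume e: "E x y" and l: "dist y r < dist x r"
  have "dist y r + 1 = dist x r" using edge_dist[OF e, of r] l by auto
  moreover have "x \<noteq> r" using l by auto
  ultimately show ?thesis using par[of x r] par_unique[of x "par r x" y r] e by auto
qed

lemma iso_pow:
  assumes "tree_isometry E f"
  shows "(E ^^ n) (f u) (f v) \<longleftrightarrow> (E ^^ n) u v"
proof (induction n arbitrary: u)
  case 0
  then show ?case using assms unfolding tree_isometry_def bij_def inj_def by auto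
next
  case (Suc n)
  have s: "surj f" using assms unfolding tree_isometry_def bij_def by auto
  show ?case
  proof
    assume "(E ^^ Suc n) (f u) (f v)"
    then obtain y where y: "E (f u) y" "(E ^^ n) y (f v)" using relpowp_Suc_D2 by metis
    obtain y' where "y = f y'" using s by (metis surjD)
    then show "(E ^^ Suc n) u v" using y Suc.IH assms unfolding tree_isometry_def
      by (metis relpowp_Suc_I2)
  next
    assume "(E ^^ Suc n) u v"
    then obtain y where y: "E u y" "(E ^^ n) y v" using relpowp_Suc_D2 by metis
    then show "(E ^^ Suc n) (f u) (f v)" using Suc.IH assms unfolding tree_isometry_def
      by (metis relpowp_Suc_I2)
  qed
qed

lemma dist_iso: "tree_isometry E f \<Longrightarrow> dist (f u) (f v) = dist u v"
  unfolding dist_def using iso_pow by simp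

lemma par_iso: "tree_isometry E f \<Longrightarrow> x \<noteq> r \<Longrightarrow> f (par r x) = par (f r) (f x)"
proof -
  assume f: "tree_isometry E f" and x: "x \<noteq> r"
  have "E (f x) (f (par r x))" using par[OF x] f unfolding tree_isometry_def by blast
  moreover have "dist (f (par r x)) (f r) < dist (f x) (f r)" using par[OF x] dist_iso[OF f] by simp
  ultimately show ?thesis using par_eq by metis
qed

lemma iso_comp: "tree_isometry E f \<Longrightarrow> tree_isometry E g \<Longrightarrow> tree_isometry E (f \<circ> g)"
  unfolding tree_isometry_def using bij_comp by auto

lemma iso_id: "tree_isometry E id"
  unfolding tree_isometry_def by auto

lemma iso_pow_fun: "tree_isometry E f \<Longrightarrow> tree_isometry E (f ^^ n)"
  by (induction n) (auto simp: iso_id iso_comp)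

lemma iso_inj: "tree_isometry E f \<Longrightarrow> f x = f y \<Longrightarrow> x = y"
  unfolding tree_isometry_def bij_def inj_def by auto

lemma glue:
  "E m y \<Longrightarrow> dist y r < dist m r \<Longrightarrow> dist x m < dist x y \<Longrightarrow> dist x r = dist x m + dist m r"
proof (induction "dist x m" arbitrary: m y)
  case 0
  then have "x = m" using dist_0_iff by metis
  then show ?case by simp
next
  case (Suc k)
  have mx: "m \<noteq> x" using Suc.hyps dist_0_iff by force
  define m' where "m' = par x m"
  have pm: "E m m'" "dist m' x + 1 = dist m x" using par[OF mx] unfolding m'_def by auto
  have dm': "dist x m' = k" using pm Suc.hyps dist_sym by (metis add_right_cancel plus_1_eq_Suc add.commute)
  have "m' \<noteq> y" using dm' Suc.prems Suc.hyps by auto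
  have "dist m r < dist m' r"
  proof (rule ccontr)
    assume "\<not> dist m r < dist m' r"
    then have "dist m' r < dist m r" using edge_dist[OF pm(1), of r] by auto
    then have "par r m = m'" using par_eq pm(1) by blast
    moreover have "par r m = y" using par_eq Suc.prems by blast
    ultimately show False using \<open>m' \<noteq> y\<close> by simp
  qed
  moreover have "E m' m" using pm symE by blast
  moreover have "dist x m' < dist x m" using dm' Suc.hyps by simp
  ultimately have "dist x r = dist x m' + dist m' r" using Suc.hyps(1)[of m' m] dm' by simp
  moreover have "dist m' r = dist m r + 1" using edge_dist[OF pm(1), of r] \<open>dist m r < dist m' r\<close> by auto
  ultimately show ?case using dm' Suc.hyps by simp
qed

lemma between_par:
  assumes "m \<noteq> a" "dist a m + dist m b = dist a b"
  shows "par b a = par m a"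
proof -
  have pa: "E a (par m a)" "dist (par m a) m + 1 = dist a m" using par assms(1) dist_sym by metis+
  have "dist (par m a) b \<le> dist (par m a) m + dist m b" by (rule dist_tri)
  then have "dist (par m a) b < dist a b" using pa assms dist_sym by (metis add_less_cancel_right
     add.commute dist_0_iff less_add_one le_less_trans add_less_mono1 less_add_Suc1 plus_1_eq_Suc)
  then show ?thesis using par_eq[OF pa(1)] dist_sym by metis
qed

lemma geo_unique:
  "dist a m1 + dist m1 b = dist a b \<Longrightarrow> dist a m2 + dist m2 b = dist a b \<Longrightarrow>
   dist m1 b = dist m2 b \<Longrightarrow> m1 = m2"
proof (induction "dist m1 b" arbitrary: m1 m2)
  case 0
  then show ?case using dist_0_iff by metis
next
  case (Suc k)
  have n1: "m1 \<noteq> b" "m2 \<noteq> b" using Suc.hyps Suc.prems dist_0_iff by force+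
  define q1 where "q1 = par b m1"
  define q2 where "q2 = par b m2"
  have p1: "E m1 q1" "dist q1 b + 1 = dist m1 b" using par n1 unfolding q1_def by auto
  have p2: "E m2 q2" "dist q2 b + 1 = dist m2 b" using par n1 unfolding q2_def by auto
  have b1: "dist a q1 + dist q1 b = dist a b"
  proof -
    have "dist a q1 \<le> dist a m1 + 1" using dist_tri[of a q1 m1] dist_edge p1 symE dist_sym by (metis add_le_mono le_refl)
    moreover have "dist a b \<le> dist a q1 + dist q1 b" by (rule dist_tri)
    ultimately show ?thesis using p1 Suc.prems by linarith
  qed
  have b2: "dist a q2 + dist q2 b = dist a b"
  proof -
    have "dist a q2 \<le> dist a m2 + 1" using dist_tri[of a q2 m2] dist_edge p2 symE dist_sym by (metis add_le_mono le_refl)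
    moreover have "dist a b \<le> dist a q2 + dist q2 b" by (rule dist_tri)
    ultimately show ?thesis using p2 Suc.prems by linarith
  qed
  have "q1 = q2" using Suc.hyps(1)[of q1 q2] b1 b2 p1 p2 Suc.hyps(2) Suc.prems(3) by simp
  moreover have "dist m1 a + 1 = dist q1 a" using b1 p1 Suc.prems(1) dist_sym by (metis add.commute add_left_cancel add.assoc)
  moreover have "dist m2 a + 1 = dist q2 a" using b2 p2 Suc.prems(2) dist_sym by (metis add.commute add_left_cancel add.assoc)
  ultimately show ?case using par_unique[of q1 m1 m2 a] p1 p2 symE by metis
qed

lemma nb_walk:
  fixes w :: "nat \<Rightarrow> 'v"
  assumes e: "\<And>i. E (w i) (w (Suc i))" and nb: "\<And>i. w (Suc (Suc i)) \<noteq> w i"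
  shows "dist (w 0) (w j) = j"
proof -
  have "dist (w 0) (w j) = j \<and> dist (w 0) (w (Suc j)) = Suc j"
  proof (induction j)
    case 0
    then show ?case using dist_edge e by auto
  next
    case (Suc j)
    then have h: "dist (w (Suc j)) (w 0) = Suc j" "dist (w j) (w 0) = j" using dist_sym by auto
    have "dist (w (Suc (Suc j))) (w 0) = Suc (Suc j)"
    proof (rule ccontr)
      assume "dist (w (Suc (Suc j))) (w 0) \<noteq> Suc (Suc j)"
      then have "dist (w (Suc (Suc j))) (w 0) < dist (w (Suc j)) (w 0)"
        using edge_dist[OF e[of "Suc j"], of "w 0"] h by auto
      then have "par (w 0) (w (Suc j)) = w (Suc (Suc j))" using par_eq e by blast
      moreover have "par (w 0) (w (Suc j)) = w j" using par_eq e symE h by simp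
      ultimately show False using nb by metis
    qed
    then show ?case using Suc dist_sym by simp
  qed
  then show ?thesis by simp
qed

lemma dist_1_edge: "dist u v = 1 \<Longrightarrow> E u v"
  using dist_pow[of u v] by auto

lemma no_triangle: "E a b \<Longrightarrow> E b c \<Longrightarrow> E c a \<Longrightarrow> a \<noteq> b \<Longrightarrow> b \<noteq> c \<Longrightarrow> a \<noteq> c \<Longrightarrow> False"
proof -
  assume h: "E a b" "E b c" "E c a" "a \<noteq> b" "b \<noteq> c" "a \<noteq> c"
  have "is_cycle E [a, b, c]" unfolding is_cycle_def using h
    by (auto simp: less_Suc_eq nth_Cons')
  then show False using nocyc by blast
qed

lemma center_fix:
  assumes fin: "finite Os" and ne: "Os \<noteq> {}" and f: "tree_isometry E f" and fO: "f ` Os = Os"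
    and noinv: "\<And>u v. E u v \<Longrightarrow> f u = v \<Longrightarrow> f v = u \<Longrightarrow> False"
  shows "\<exists>z. f z = z"
proof -
  define rad where "rad x = Max ((\<lambda>ob. dist x ob) ` Os)" for x
  have rad_ge: "ob \<in> Os \<Longrightarrow> dist x ob \<le> rad x" for x ob unfolding rad_def using fin by auto
  have rad_lt: "(\<And>ob. ob \<in> Os \<Longrightarrow> dist x ob < R) \<Longrightarrow> rad x < R" for x R
    unfolding rad_def using fin ne by auto
  obtain x0 where x0: "\<forall>y. rad x0 \<le> rad y" using ex_has_least_nat[of "\<lambda>_. True" undefined rad] by blast
  define R where "R = rad x0"
  have rad_f: "rad (f x) = rad x" for x
  proof -
    have "(\<lambda>ob. dist (f x) ob) ` Os = (\<lambda>ob. dist (f x) ob) ` (f ` Os)" using fO by simp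
    also have "\<dots> = (\<lambda>ob. dist x ob) ` Os" using dist_iso[OF f] by (auto simp: image_image)
    finally show ?thesis unfolding rad_def by simp
  qed
  have adj: "E x y" if "rad x = R" "rad y = R" "x \<noteq> y" for x y
  proof (rule ccontr)
    assume ne: "\<not> E x y"
    have "dist x y \<noteq> 0" using that(3) dist_0_iff by simp
    moreover have "dist x y \<noteq> 1" using ne dist_1_edge by blast
    ultimately have d2: "dist x y \<ge> 2" by linarith
    have yx: "y \<noteq> x" using that by simp
    define m where "m = par x y"
    have pm: "E y m" "dist m x + 1 = dist y x" using par[OF yx] unfolding m_def by auto
    have sy: "dist x m = dist m x" "dist x y = dist y x" using dist_sym by auto
    have dxm: "dist x m < dist x y" using pm sy by simp
    have "dist x m \<noteq> 0" using pm d2 sy by simp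
    have "rad m < R"
    proof (rule rad_lt)
      fix ob assume ob: "ob \<in> Os"
      show "dist m ob < R"
      proof (cases "dist m ob < dist y ob")
        case True then show ?thesis using rad_ge[OF ob, of y] that by simp
      next
        case False
        then have "dist y ob < dist m ob" using edge_dist[OF pm(1), of ob] by auto
        then have "dist x ob = dist x m + dist m ob" using glue[of m y ob x] pm(1) symE dxm by blast
        then have "dist m ob < dist x ob" using \<open>dist x m \<noteq> 0\<close> by simp
        then show ?thesis using rad_ge[OF ob, of x] that by simp
      qed
    qed
    then show False using x0 unfolding R_def by (simp add: not_less[symmetric])
  qed
  show ?thesis
  proof (cases "f x0 = x0")
    case True then show ?thesis by blast
  next
    case False
    have r1: "rad (f x0) = R" "rad (f (f x0)) = R" using rad_f R_def by auto
    have e1: "E x0 (f x0)" using adj[of x0 "f x0"] r1 R_def False by simp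
    show ?thesis
    proof (cases "f (f x0) = f x0")
      case True then show ?thesis by blast
    next
      case False2: False
      have "f (f x0) \<noteq> x0" using noinv[OF e1] by blast
      then have "E x0 (f (f x0))" using adj[of x0 "f (f x0)"] r1 R_def by simp
      moreover have "E (f x0) (f (f x0))" using adj r1 False2 by metis
      ultimately have False using no_triangle[of x0 "f x0" "f (f x0)"] e1 symE False False2
        \<open>f (f x0) \<noteq> x0\<close> by metis
      then show ?thesis by blast
    qed
  qed
qed

end

locale axis = stree E for E :: "'v \<Rightarrow> 'v \<Rightarrow> bool" +
  fixes s :: "'v \<Rightarrow> 'v"
  assumes s_iso: "tree_isometry E s"
    and nofix: "\<And>j x. 0 < j \<Longrightarrow> (s ^^ j) x \<noteq> x"
begin

definition L :: nat where "L = (LEAST l. \<exists>x. dist x (s x) = l)"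
definition M :: "'v set" where "M = {x. dist x (s x) = L}"
definition nx :: "'v \<Rightarrow> 'v" where "nx x = par (s x) x"

lemma L_le: "L \<le> dist x (s x)"
  unfolding L_def by (rule Least_le) blast

lemma M_ne: "\<exists>x. x \<in> M"
proof -
  have "\<exists>x. dist x (s x) = L" unfolding L_def by (rule LeastI_ex) blast
  then show ?thesis unfolding M_def by blast
qed

lemma s_ne: "s x \<noteq> x" using nofix[of 1 x] by simp

lemma L_pos: "0 < L"
proof -
  obtain x where "x \<in> M" using M_ne by blast
  then have "dist x (s x) = L" unfolding M_def by simp
  moreover have "dist x (s x) \<noteq> 0" using s_ne[of x] dist_0_iff by metis
  ultimately show ?thesis by simp
qed

definition commuting :: "('v \<Rightarrow> 'v) \<Rightarrow> bool" where
  "commuting f \<longleftrightarrow> tree_isometry E f \<and> (\<forall>x. f (s x) = s (f x))"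

lemma commuting_s: "commuting s" unfolding commuting_def using s_iso by simp

lemma comm_M: "commuting f \<Longrightarrow> x \<in> M \<Longrightarrow> f x \<in> M"
  unfolding commuting_def M_def using dist_iso[of f x "s x"] by simp

lemma comm_nx: "commuting f \<Longrightarrow> f (nx x) = nx (f x)"
  unfolding commuting_def nx_def using par_iso[of f x "s x"] s_ne[of x] by simp

lemma comm_nx_pow: "commuting f \<Longrightarrow> f ((nx ^^ i) x) = (nx ^^ i) (f x)"
  by (induction i) (auto simp: comm_nx)

lemma comm_pow: "commuting f \<Longrightarrow> commuting (f ^^ n)"
proof -
  assume c: "commuting f"
  have "(f ^^ n) (s x) = s ((f ^^ n) x)" for x
    using c unfolding commuting_def by (induction n) auto
  then show ?thesis using c iso_pow_fun unfolding commuting_def by blast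
qed

lemma comm_pow_M: "commuting f \<Longrightarrow> x \<in> M \<Longrightarrow> (f ^^ n) x \<in> M"
  using comm_pow comm_M by blast

lemma nx_edge: "E x (nx x)" unfolding nx_def using par[of x "s x"] s_ne[of x] by simp

lemma nx_M: "x \<in> M \<Longrightarrow> nx x \<in> M"
proof -
  assume x: "x \<in> M"
  have p: "dist (nx x) (s x) + 1 = dist x (s x)" unfolding nx_def using par[of x "s x"] s_ne[of x] by simp
  have "dist (s x) (s (nx x)) = 1" using dist_iso[OF s_iso] dist_edge[OF nx_edge[of x]] by simp
  then have "dist (nx x) (s (nx x)) \<le> L" using dist_tri[of "nx x" "s (nx x)" "s x"] p x
    unfolding M_def by simp
  then show ?thesis using L_le[of "nx x"] unfolding M_def by simp
qed

lemma nx_pow_M: "x \<in> M \<Longrightarrow> (nx ^^ i) x \<in> M"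
  by (induction i) (auto simp: nx_M)

lemma seg:
  assumes x: "x \<in> M"
  shows "i \<le> L \<Longrightarrow> dist x ((nx ^^ i) x) = i \<and> dist ((nx ^^ i) x) (s x) = L - i"
proof (induction i)
  case 0 then show ?case using x unfolding M_def by simp
next
  case (Suc i)
  define w where "w = (nx ^^ i) x"
  have wM: "w \<in> M" using nx_pow_M x unfolding w_def by blast
  have h: "dist x w = i" "dist w (s x) = L - i" using Suc unfolding w_def by auto
  have wsx: "w \<noteq> s x" using h Suc.prems dist_0_iff by force
  have "dist (s x) (s w) = i" using dist_iso[OF s_iso] h by simp
  then have "dist w (s x) + dist (s x) (s w) = dist w (s w)" using h wM Suc.prems unfolding M_def by simp
  then have "par (s w) w = par (s x) w" using between_par[of "s x" w "s w"] wsx by simp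
  then have nw: "nx w = par (s x) w" unfolding nx_def by simp
  then have p: "E w (nx w)" "dist (nx w) (s x) + 1 = dist w (s x)" using par[of w "s x"] wsx by simp+
  have d1: "dist (nx w) (s x) = L - Suc i" using p h by simp
  have "dist x (nx w) \<le> Suc i" using dist_tri[of x "nx w" w] h dist_edge[OF p(1)] by simp
  moreover have "L \<le> dist x (nx w) + (L - Suc i)" using dist_tri[of x "s x" "nx w"] d1 x unfolding M_def by simp
  ultimately have "dist x (nx w) = Suc i" using Suc.prems by linarith
  then show ?case using d1 unfolding w_def by simp
qed

lemma nxL: "x \<in> M \<Longrightarrow> (nx ^^ L) x = s x"
  using seg[of x L] dist_0_iff by simp

lemma nxL_mult: "x \<in> M \<Longrightarrow> (nx ^^ (m * L)) x = (s ^^ m) x"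
proof (induction m arbitrary: x)
  case 0 then show ?case by simp
next
  case (Suc m)
  have sm: "Suc m * L = m * L + L" by simp
  have "(nx ^^ (Suc m * L)) x = (nx ^^ (m * L)) ((nx ^^ L) x)" by (simp only: sm funpow_add o_apply)
  also have "\<dots> = (nx ^^ (m * L)) (s x)" using nxL Suc.prems by simp
  also have "\<dots> = (s ^^ m) (s x)" using Suc.IH comm_M[OF commuting_s Suc.prems] by blast
  also have "\<dots> = (s ^^ Suc m) x" by (simp add: funpow_Suc_right del: funpow.simps)
  finally show ?case .
qed

lemma nx_inj: "x \<in> M \<Longrightarrow> y \<in> M \<Longrightarrow> nx x = nx y \<Longrightarrow> x = y"
proof -
  assume x: "x \<in> M" and y: "y \<in> M" and e: "nx x = nx y"
  have LL: "L = Suc (L - 1)" using L_pos by simp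
  have "(nx ^^ L) x = (nx ^^ (L - 1)) (nx x)" "(nx ^^ L) y = (nx ^^ (L - 1)) (nx y)"
    by (subst LL, simp only: funpow_Suc_right o_apply)+
  then have "s x = s y" using nxL x y e by simp
  then show ?thesis using iso_inj s_iso by blast
qed

lemma nx_pow_inj: "x \<in> M \<Longrightarrow> y \<in> M \<Longrightarrow> (nx ^^ j) x = (nx ^^ j) y \<Longrightarrow> x = y"
proof (induction j arbitrary: x y)
  case 0 then show ?case by simp
next
  case (Suc j)
  have "(nx ^^ j) (nx x) = (nx ^^ j) (nx y)" using Suc.prems by (simp add: funpow_Suc_right del: funpow.simps)
  then have "nx x = nx y" using Suc.IH nx_M Suc.prems by blast
  then show ?case using nx_inj Suc.prems by blast
qed

lemma nx_aper: "x \<in> M \<Longrightarrow> 0 < j \<Longrightarrow> (nx ^^ j) x \<noteq> x"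
proof
  assume x: "x \<in> M" and j: "0 < j" and e: "(nx ^^ j) x = x"
  have "((nx ^^ j) ^^ n) x = x" for n using e by (induction n) auto
  then have "((nx ^^ j) ^^ L) x = x" by blast
  then have "(nx ^^ (j * L)) x = x" by (simp add: funpow_mult mult.commute)
  then have "(s ^^ j) x = x" using nxL_mult[OF x, of j] by simp
  then show False using nofix j by blast
qed

lemma ray: "x \<in> M \<Longrightarrow> dist x ((nx ^^ j) x) = j"
proof -
  assume x: "x \<in> M"
  define w where "w i = (nx ^^ i) x" for i
  have "dist (w 0) (w j) = j"
  proof (rule nb_walk)
    show "E (w i) (w (Suc i))" for i unfolding w_def using nx_edge by simp
    show "w (Suc (Suc i)) \<noteq> w i" for i
    proof -
      have "(nx ^^ (2 + i)) x = (nx ^^ 2) ((nx ^^ i) x)" by (simp only: funpow_add o_apply)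
      then show ?thesis using nx_aper[OF nx_pow_M[OF x, of i], of 2] unfolding w_def
        by (simp add: numeral_2_eq_2)
    qed
  qed
  then show ?thesis unfolding w_def by simp
qed

lemma nx_pow_comm: "(nx ^^ a) ((nx ^^ b) x) = (nx ^^ b) ((nx ^^ a) x)"
  by (metis funpow_add add.commute o_apply)

lemma merge:
  assumes x: "x \<in> M" and x': "x' \<in> M"
  shows "\<exists>i j. (nx ^^ i) x = (nx ^^ j) x'"
proof -
  define y where "y j = (nx ^^ j) x'" for j
  define f where "f j = dist (y j) x" for j
  have yM: "y j \<in> M" for j unfolding y_def using nx_pow_M x' by blast
  have ye: "E (y j) (y (Suc j))" for j unfolding y_def using nx_edge by simp
  have ynb: "y (Suc (Suc j)) \<noteq> y j" for j
  proof -
    have "(nx ^^ (2 + j)) x' = (nx ^^ 2) ((nx ^^ j) x')" by (simp only: funpow_add o_apply)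
    then show ?thesis using nx_aper[OF nx_pow_M[OF x', of j], of 2] unfolding y_def
      by (simp add: numeral_2_eq_2)
  qed
  have inc: "f (Suc (Suc j)) = f (Suc j) + 1" if h: "f (Suc j) = f j + 1" for j
  proof (rule ccontr)
    assume "f (Suc (Suc j)) \<noteq> f (Suc j) + 1"
    then have "f (Suc (Suc j)) < f (Suc j)" using edge_dist[OF ye[of "Suc j"], of x] unfolding f_def by auto
    then have "par x (y (Suc j)) = y (Suc (Suc j))" using par_eq ye unfolding f_def by blast
    moreover have "par x (y (Suc j)) = y j" using par_eq[of "y (Suc j)" "y j" x] ye symE h unfolding f_def by simp
    ultimately show False using ynb by metis
  qed
  obtain j0 where j0: "f (Suc j0) = f j0 + 1"
  proof (rule ccontr)
    assume "\<not> thesis"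
    then have "f (Suc j) \<noteq> f j + 1" for j using that by blast
    then have d: "f (Suc j) + 1 = f j" for j using edge_dist[OF ye[of j], of x] unfolding f_def by auto
    have "f j + j = f 0" for j
    proof (induction j)
      case (Suc j) then show ?case using d[of j] by simp
    qed simp
    from this[of "Suc (f 0)"] show False by simp
  qed
  have incall: "f (Suc (j0 + i)) = f (j0 + i) + 1" for i
    by (induction i) (use j0 inc in auto)
  have fj: "f (j0 + i) = f j0 + i" for i
    by (induction i) (use incall in auto)
  define b where "b = y j0"
  define \<rho> where "\<rho> = f j0"
  define N where "N = \<rho> * L"
  have bM: "b \<in> M" unfolding b_def by (rule yM)
  have \<rho>N: "\<rho> \<le> N" unfolding N_def using L_pos by simp
  define b' where "b' = (s ^^ \<rho>) b"
  have b'1: "b' = y (j0 + N)" unfolding b'_def b_def y_def N_def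
    using nxL_mult[OF yM[of j0, unfolded y_def], of \<rho>] nx_pow_comm by (simp add: funpow_add)
  have d_xb': "dist x b' = \<rho> + N" using fj[of N] b'1 dist_sym unfolding f_def \<rho>_def by simp
  have d_bb': "dist b b' = N" unfolding b'_def using nxL_mult[OF bM, of \<rho>] ray[OF bM, of N] N_def by simp
  have d_xb: "dist x b = \<rho>" unfolding b_def \<rho>_def f_def using dist_sym by simp
  define c where "c = (nx ^^ \<rho>) x"
  have cM: "c \<in> M" unfolding c_def using nx_pow_M x by blast
  have d_xc: "dist x c = \<rho>" unfolding c_def using ray x by blast
  have sx: "(s ^^ \<rho>) x = (nx ^^ (N - \<rho>)) c"
  proof -
    have e: "N = (N - \<rho>) + \<rho>" using \<rho>N by simp
    have "(nx ^^ N) x = (nx ^^ (N - \<rho>)) c" unfolding c_def by (subst e, simp only: funpow_add o_apply)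
    then show ?thesis using nxL_mult[OF x, of \<rho>] unfolding N_def by simp
  qed
  have "dist c ((s ^^ \<rho>) x) = N - \<rho>" using sx ray[OF cM] by simp
  moreover have "dist ((s ^^ \<rho>) x) b' = \<rho>" unfolding b'_def using dist_iso[OF iso_pow_fun[OF s_iso]] d_xb by simp
  ultimately have "dist c b' \<le> N" using dist_tri[of c b' "(s ^^ \<rho>) x"] \<rho>N by simp
  moreover have "\<rho> + N \<le> \<rho> + dist c b'" using dist_tri[of x b' c] d_xb' d_xc by simp
  ultimately have d_cb': "dist c b' = N" by simp
  have "b = c" using geo_unique[of x b b' c] d_xb d_bb' d_xc d_cb' d_xb' by simp
  then show ?thesis unfolding b_def c_def y_def by metis
qed

lemma roots_agree:
  assumes f1: "commuting f1" and f2: "commuting f2" and K: "0 < K"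
    and r1: "\<And>x. (f1 ^^ K) x = s x" and r2: "\<And>x. (f2 ^^ K) x = s x"
    and x0: "x0 \<in> M"
  shows "f1 x0 = f2 x0"
proof -
  obtain a b where ab: "(nx ^^ a) (f1 x0) = (nx ^^ b) (f2 x0)"
    using merge[OF comm_M[OF f1 x0] comm_M[OF f2 x0]] by blast
  have Z: "(nx ^^ a) (f1 z) = (nx ^^ b) (f2 z)" if z: "z \<in> M" for z
  proof -
    obtain p q where pq: "(nx ^^ p) x0 = (nx ^^ q) z" using merge[OF x0 z] by blast
    have "(nx ^^ q) ((nx ^^ a) (f1 z)) = (nx ^^ a) (f1 ((nx ^^ q) z))"
      using comm_nx_pow[OF f1] nx_pow_comm by metis
    also have "\<dots> = (nx ^^ a) (f1 ((nx ^^ p) x0))" using pq by simp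
    also have "\<dots> = (nx ^^ p) ((nx ^^ a) (f1 x0))"
      using comm_nx_pow[OF f1] nx_pow_comm by metis
    also have "\<dots> = (nx ^^ p) ((nx ^^ b) (f2 x0))" using ab by simp
    also have "\<dots> = (nx ^^ b) (f2 ((nx ^^ p) x0))"
      using comm_nx_pow[OF f2] nx_pow_comm by metis
    also have "\<dots> = (nx ^^ b) (f2 ((nx ^^ q) z))" using pq by simp
    also have "\<dots> = (nx ^^ q) ((nx ^^ b) (f2 z))"
      using comm_nx_pow[OF f2] nx_pow_comm by metis
    finally show ?thesis
      using nx_pow_inj nx_pow_M comm_M f1 f2 z by metis
  qed
  have it: "(nx ^^ (a * r)) ((f1 ^^ r) x0) = (nx ^^ (b * r)) ((f2 ^^ r) x0)" for r
  proof (induction r)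
    case 0 then show ?case by simp
  next
    case (Suc r)
    define w1 where "w1 = (f1 ^^ r) x0"
    define w2 where "w2 = (f2 ^^ r) x0"
    have w1M: "w1 \<in> M" unfolding w1_def using comm_pow_M[OF f1 x0] by blast
    have e1: "a * Suc r = a * r + a" "b * Suc r = b * r + b" by simp_all
    have "(nx ^^ (a * Suc r)) ((f1 ^^ Suc r) x0) = (nx ^^ (a * r)) ((nx ^^ a) (f1 w1))"
      unfolding w1_def by (simp only: e1 funpow_add o_apply funpow.simps(2))
    also have "\<dots> = (nx ^^ (a * r)) ((nx ^^ b) (f2 w1))" using Z[OF w1M] by simp
    also have "\<dots> = (nx ^^ b) (f2 ((nx ^^ (a * r)) w1))"
      using comm_nx_pow[OF f2] nx_pow_comm by metis
    also have "\<dots> = (nx ^^ b) (f2 ((nx ^^ (b * r)) w2))" using Suc.IH unfolding w1_def w2_def by simp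
    also have "\<dots> = (nx ^^ (b * Suc r)) ((f2 ^^ Suc r) x0)"
      unfolding w2_def using comm_nx_pow[OF f2]
      by (simp only: e1 funpow_add o_apply funpow.simps(2)) (metis nx_pow_comm)
    finally show ?case .
  qed
  have sM: "s x0 \<in> M" using comm_M[OF commuting_s x0] .
  have key: "(nx ^^ (a * K)) (s x0) = (nx ^^ (b * K)) (s x0)" using it[of K] r1 r2 by simp
  have "a = b"
  proof (rule ccontr)
    assume "a \<noteq> b"
    then consider "a < b" | "b < a" by linarith
    then show False
    proof cases
      case 1
      have "b * K = a * K + (b - a) * K" using 1 by (simp add: diff_mult_distrib)
      then have "(nx ^^ (a * K)) (s x0) = (nx ^^ (a * K)) ((nx ^^ ((b - a) * K)) (s x0))"
        using key by (simp only: funpow_add o_apply)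
      then have "s x0 = (nx ^^ ((b - a) * K)) (s x0)" using nx_pow_inj sM nx_pow_M by metis
      then show False using nx_aper[OF sM, of "(b - a) * K"] 1 K by simp
    next
      case 2
      have "a * K = b * K + (a - b) * K" using 2 by (simp add: diff_mult_distrib)
      then have "(nx ^^ (b * K)) ((nx ^^ ((a - b) * K)) (s x0)) = (nx ^^ (b * K)) (s x0)"
        using key by (simp only: funpow_add o_apply)
      then have "s x0 = (nx ^^ ((a - b) * K)) (s x0)" using nx_pow_inj sM nx_pow_M by metis
      then show False using nx_aper[OF sM, of "(a - b) * K"] 2 K by simp
    qed
  qed
  then show ?thesis using ab nx_pow_inj comm_M f1 f2 x0 by metis
qed

end




primrec twp :: "('g, 'b) monoid_scheme \<Rightarrow> ('g \<Rightarrow> 'g) \<Rightarrow> 'g \<Rightarrow> nat \<Rightarrow> 'g" where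
  "twp G Phi g 0 = \<one>\<^bsub>G\<^esub>"
| "twp G Phi g (Suc j) = Phi (twp G Phi g j) \<otimes>\<^bsub>G\<^esub> g"

locale P71 = group G + stree E
  for G :: "('g, 'b) monoid_scheme" (structure) and E :: "'v \<Rightarrow> 'v \<Rightarrow> bool" +
  fixes act :: "'g \<Rightarrow> 'v \<Rightarrow> 'v" and Phi :: "'g \<Rightarrow> 'g" and t :: "'v \<Rightarrow> 'v"
  assumes tf: "torsion_free G"
    and ga: "group_action G UNIV act"
    and actiso: "\<And>g. g \<in> carrier G \<Longrightarrow> tree_isometry E (act g)"
    and tes: "trivial_edge_stabilizers G act E"
    and phiiso: "Phi \<in> iso G G"
    and tiso: "tree_isometry E t"
    and teq: "\<And>g x. g \<in> carrier G \<Longrightarrow> t (act g x) = act (Phi g) (t x)"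
    and torb: "\<And>u v. E u v \<Longrightarrow> \<exists>g\<in>carrier G. t u = act g u \<and> t v = act g v"
    and nt: "\<And>v. t v = v \<Longrightarrow> neat (G\<lparr>carrier := stabilizer G act v\<rparr>) Phi"
begin

lemma main: "neat G Phi"
proof -
  interpret ga: group_action G UNIV act using ga .
  have phihom: "Phi \<in> hom G G" using phiiso unfolding iso_def by simp
  have phibij: "bij_betw Phi (carrier G) (carrier G)" using phiiso unfolding iso_def by simp
  interpret ph: group_hom G G Phi
    using phihom by (simp add: group_hom_def group_hom_axioms_def is_group)
  have phic: "g \<in> carrier G \<Longrightarrow> Phi g \<in> carrier G" for g by (rule hom_in_carrier[OF phihom])
  have phipc: "g \<in> carrier G \<Longrightarrow> (Phi ^^ n) g \<in> carrier G" for g n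
    by (induction n) (auto simp: phic)
  have phim: "a \<in> carrier G \<Longrightarrow> b \<in> carrier G \<Longrightarrow> Phi (a \<otimes> b) = Phi a \<otimes> Phi b" for a b
    by (rule hom_mult[OF phihom])
  have phi1: "Phi \<one> = \<one>" by (rule ph.hom_one)
  have phiinv: "a \<in> carrier G \<Longrightarrow> Phi (inv a) = inv (Phi a)" for a by (rule ph.hom_inv)
  have phipinv: "a \<in> carrier G \<Longrightarrow> (Phi ^^ n) (inv a) = inv ((Phi ^^ n) a)" for a n
    by (induction n) (auto simp: phiinv phipc)
  have actc: "a \<in> carrier G \<Longrightarrow> b \<in> carrier G \<Longrightarrow> act (a \<otimes> b) x = act a (act b x)" for a b x
    by (rule ga.composition_rule) auto
  have act1: "act \<one> x = x" for x using ga.id_eq_one by (metis UNIV_I restrict_apply')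
  have actinv: "a \<in> carrier G \<Longrightarrow> act (inv a) (act a x) = x" for a x
    using actc[of "inv a" a x] act1 by simp
  have actinv2: "a \<in> carrier G \<Longrightarrow> act a (act (inv a) x) = x" for a x
    using actc[of a "inv a" x] act1 by simp
  have estab: "g = \<one>" if "E u v" "g \<in> carrier G" "act g u = u" "act g v = v" for u v g
  proof -
    have "g \<in> {g \<in> carrier G. {act g u, act g v} = {u, v}}" using that by simp
    then show ?thesis using tes that(1) unfolding trivial_edge_stabilizers_def by blast
  qed
  have estab2: "g = \<one>" if "E u v" "g \<in> carrier G" "act g u = v" "act g v = u" for u v g
  proof -
    have "g \<in> {g \<in> carrier G. {act g u, act g v} = {u, v}}" using that by auto
    then show ?thesis using tes that(1) unfolding trivial_edge_stabilizers_def by blast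
  qed
  have tinv: False if uv: "E u v" "t u = v" "t v = u" for u v
  proof -
    obtain g where g: "g \<in> carrier G" "t u = act g u" "t v = act g v" using torb[OF uv(1)] by blast
    then have "g = \<one>" using estab2[OF uv(1) g(1)] uv by simp
    then have "u = v" using g uv act1 by simp
    then show False using uv(1) irrE by simp
  qed
  have tpeq: "g \<in> carrier G \<Longrightarrow> (t ^^ n) (act g x) = act ((Phi ^^ n) g) ((t ^^ n) x)" for g n x
    by (induction n) (auto simp: teq phipc)
  have neat_at: "Phi g = g" if "t w = w" "g \<in> carrier G" "act g w = w" "0 < N" "(Phi ^^ N) g = g" for w g N
  proof -
    have "neat (G\<lparr>carrier := stabilizer G act w\<rparr>) Phi" using nt that(1) by blast
    moreover have "g \<in> stabilizer G act w" unfolding stabilizer_def using that by simp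
    moreover have "aut_pow (G\<lparr>carrier := stabilizer G act w\<rparr>) Phi (int N) g = g"
      unfolding aut_pow_def using that by simp
    moreover have "int N \<noteq> 0" using that by simp
    moreover note nn = calculation(1)
    have "\<forall>h\<in>stabilizer G act w. \<forall>k. k \<noteq> 0 \<and> aut_pow (G\<lparr>carrier := stabilizer G act w\<rparr>) Phi k h = h \<longrightarrow> Phi h = h"
      using nn unfolding neat_def by simp
    ultimately show ?thesis by blast
  qed

  have twp_c: "g \<in> carrier G \<Longrightarrow> twp G Phi g j \<in> carrier G" for g j
    by (induction j) (auto simp: phic)
  have twp_Suc: "g \<in> carrier G \<Longrightarrow> twp G Phi g (Suc j) = (Phi ^^ j) g \<otimes> twp G Phi g j" for g j
  proof (induction j)
    case 0 then show ?case by (simp add: phi1)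
  next
    case (Suc j)
    have "twp G Phi g (Suc (Suc j)) = Phi ((Phi ^^ j) g \<otimes> twp G Phi g j) \<otimes> g"
      using Suc by simp
    also have "\<dots> = (Phi ^^ Suc j) g \<otimes> (Phi (twp G Phi g j) \<otimes> g)"
      using Suc.prems by (simp add: phim phipc twp_c phic m_assoc)
    finally show ?case by simp
  qed
  have lemB: "t v = v" if N: "0 < N" and tv: "(t ^^ N) v = v" for N v
  proof -
    define Os where "Os = (\<lambda>i. (t ^^ i) v) ` {..<N}"
    have fin: "finite Os" unfolding Os_def by simp
    have ne: "Os \<noteq> {}" unfolding Os_def using N by auto
    have tO: "t ` Os = Os"
    proof
      show "t ` Os \<subseteq> Os"
      proof
        fix y assume "y \<in> t ` Os"
        then obtain i where i: "i < N" "y = t ((t ^^ i) v)" unfolding Os_def by auto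
        show "y \<in> Os"
        proof (cases "Suc i < N")
          case True then show ?thesis using i unfolding Os_def by (auto intro!: image_eqI[of _ _ "Suc i"])
        next
          case False then have "Suc i = N" using i by simp
          then have "(t ^^ N) v = t ((t ^^ i) v)" by (metis funpow.simps(2) o_apply)
          then have "y = v" using i tv by simp
          then show ?thesis unfolding Os_def using N by (auto intro!: image_eqI[of _ _ 0])
        qed
      qed
      show "Os \<subseteq> t ` Os"
      proof
        fix y assume "y \<in> Os"
        then obtain i where i: "i < N" "y = (t ^^ i) v" unfolding Os_def by auto
        show "y \<in> t ` Os"
        proof (cases i)
          case 0
          have NN: "N = Suc (N - 1)" using N by simp
          have "(t ^^ N) v = t ((t ^^ (N - 1)) v)" by (subst NN, simp only: funpow.simps(2) o_apply)
          then have "y = t ((t ^^ (N - 1)) v)" using i 0 tv by simp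
          then show ?thesis unfolding Os_def using N by auto
        next
          case (Suc j)
          then show ?thesis using i unfolding Os_def by auto
        qed
      qed
    qed
    have "\<exists>z. t z = z"
      by (rule center_fix[OF fin ne tiso tO]) (rule tinv)
    then obtain z where "t z = z" by blast
    then obtain w where w: "t w = w" and wmin: "\<And>y. t y = y \<Longrightarrow> dist w v \<le> dist y v"
      using ex_has_least_nat[of "\<lambda>w. t w = w" z "\<lambda>w. dist w v"] by metis
    show ?thesis
    proof (rule ccontr)
      assume tvv: "t v \<noteq> v"
      then have wv: "w \<noteq> v" using w by auto
      define u where "u = par v w"
      have pu: "E w u" "dist u v + 1 = dist w v" using par[OF wv] unfolding u_def by auto
      have tNw: "(t ^^ N) w = w" using w by (induction N) auto
      have tNu: "(t ^^ N) u = u"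
        using par_iso[OF iso_pow_fun[OF tiso, of N] wv] tNw tv unfolding u_def by simp
      obtain g where g: "g \<in> carrier G" "t w = act g w" "t u = act g u" using torb[OF pu(1)] by blast
      have gw: "act g w = w" using g w by simp
      have tj: "(t ^^ j) y = act (twp G Phi g j) y" if "y = w \<or> y = u" for j y
      proof (induction j)
        case 0 then show ?case using act1 by simp
      next
        case (Suc j)
        have "(t ^^ Suc j) y = t (act (twp G Phi g j) y)" using Suc by simp
        also have "\<dots> = act (Phi (twp G Phi g j)) (t y)" using teq twp_c g(1) by blast
        also have "\<dots> = act (Phi (twp G Phi g j)) (act g y)" using that g by auto
        also have "\<dots> = act (twp G Phi g (Suc j)) y" using actc phic twp_c g(1) by simp
        finally show ?case .
      qed
      have cN: "twp G Phi g N = \<one>"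
        using estab[OF pu(1) twp_c[OF g(1)]] tj[of w N] tj[of u N] tNw tNu by simp
      have "twp G Phi g (Suc N) = g" using cN g(1) by (simp add: phi1)
      moreover have "twp G Phi g (Suc N) = (Phi ^^ N) g" using twp_Suc[OF g(1), of N] cN g(1) phipc by simp
      ultimately have "(Phi ^^ N) g = g" by simp
      then have pg: "Phi g = g" using neat_at[OF w g(1) gw N] by simp
      have pjg: "(Phi ^^ j) g = g" for j by (induction j) (auto simp: pg)
      have "twp G Phi g j = g [^] j" for j
      proof (induction j)
        case (Suc j)
        then show ?case using twp_Suc[OF g(1), of j] pjg[of j] g(1) nat_pow_Suc2[of g j] by simp
      qed simp
      then have "g [^] N = \<one>" using cN by simp
      then have "g = \<one>" using tf g(1) N unfolding torsion_free_def by blast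
      then have "t u = u" using g act1 by simp
      then have "dist w v \<le> dist u v" using wmin by blast
      then show False using pu by simp
    qed
  qed

  have core: "Phi h = h" if h: "h \<in> carrier G" and K: "0 < K" and hK: "(Phi ^^ K) h = h" for h K
  proof -
    define s where "s = t ^^ K"
    have s_iso: "tree_isometry E s" unfolding s_def by (rule iso_pow_fun[OF tiso])
    have hi: "inv h \<in> carrier G" using h by simp
    have hiK: "(Phi ^^ K) (inv h) = inv h" using phipinv[OF h] hK by simp
    have scomm: "s (act h x) = act h (s x)" for x unfolding s_def using tpeq[OF h] hK by simp
    have scomm': "s (act (inv h) x) = act (inv h) (s x)" for x unfolding s_def using tpeq[OF hi] hiK by simp
    have fixK: "t z = z \<Longrightarrow> (t ^^ n) z = z" for z n by (induction n) auto
    have hsplit: "Phi h = h" if c1: "inv h \<otimes> Phi h = \<one>"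
    proof -
      have "h \<otimes> (inv h \<otimes> Phi h) = Phi h" using h phic by (simp add: m_assoc[symmetric])
      then show ?thesis using c1 h by simp
    qed
    show ?thesis
    proof (cases "\<exists>w. s w = w")
      case True
      then obtain w where sw: "s w = w" by blast
      have tw: "t w = w" using lemB[OF K] sw unfolding s_def by blast
      have fh: "t (act h z) = act h z" if "t z = z" for z
      proof -
        have "(t ^^ K) (act h z) = act h z" using tpeq[OF h, of K z] hK fixK[OF that] by simp
        then show ?thesis using lemB[OF K] by blast
      qed
      have pa: "act (Phi h) z = act h z" if tz: "t z = z" for z
      proof -
        have "act (Phi h) z = act (Phi h) (t z)" using tz by simp
        also have "\<dots> = t (act h z)" using teq[OF h] by simp
        also have "\<dots> = act h z" using fh[OF tz] .
        finally show ?thesis .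
      qed
      show ?thesis
      proof (cases "act h w = w")
        case True
        show ?thesis using neat_at[OF tw h True K hK] .
      next
        case False
        define z1 where "z1 = act h w"
        define q where "q = par w z1"
        have z1w: "z1 \<noteq> w" using False unfolding z1_def .
        have tz1: "t z1 = z1" unfolding z1_def using fh[OF tw] .
        have tq: "t q = q" unfolding q_def using par_iso[OF tiso z1w] tw tz1 by simp
        have e: "E z1 q" unfolding q_def using par[OF z1w] by simp
        have cc: "inv h \<otimes> Phi h \<in> carrier G" using h phic by simp
        have fx: "act (inv h \<otimes> Phi h) z = z" if tz: "t z = z" for z
          using actc[OF hi phic[OF h]] pa[OF tz] actinv[OF h] by simp
        have "inv h \<otimes> Phi h = \<one>" using estab[OF e cc fx[OF tz1] fx[OF tq]] .
        then show ?thesis by (rule hsplit)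
      qed
    next
      case False
      have nofix: "(s ^^ j) x \<noteq> x" if j: "0 < j" for j x
      proof
        assume sj: "(s ^^ j) x = x"
        have "(t ^^ (K * j)) x = x" using sj unfolding s_def by (simp add: funpow_mult)
        moreover have "0 < K * j" using K j by simp
        ultimately have "t x = x" using lemB by blast
        then have "s x = x" unfolding s_def using fixK by blast
        then show False using False by blast
      qed
      interpret ax: axis E s
        by (rule axis.intro, unfold_locales, rule s_iso, rule nofix)
      have tcomm: "ax.commuting t"
        unfolding ax.commuting_def using tiso by (simp add: s_def funpow_swap1)
      define t2 where "t2 z = act h (t (act (inv h) z))" for z
      have t2iso: "tree_isometry E t2"
      proof -
        have "t2 = act h \<circ> (t \<circ> act (inv h))" unfolding t2_def by auto
        then show ?thesis using iso_comp[OF actiso[OF h] iso_comp[OF tiso actiso[OF hi]]] by simp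
      qed
      have t2comm: "ax.commuting t2"
        unfolding ax.commuting_def
      proof (intro conjI allI t2iso)
        fix x
        have "t2 (s x) = act h (t (s (act (inv h) x)))" unfolding t2_def using scomm' by simp
        also have "\<dots> = act h (s (t (act (inv h) x)))" using tcomm unfolding ax.commuting_def by simp
        also have "\<dots> = s (t2 x)" unfolding t2_def using scomm by simp
        finally show "t2 (s x) = s (t2 x)" .
      qed
      have t2pow: "(t2 ^^ r) z = act h ((t ^^ r) (act (inv h) z))" for r z
      proof (induction r)
        case 0 then show ?case using actinv2[OF h] by simp
      next
        case (Suc r)
        then show ?case unfolding t2_def using actinv[OF h] by simp
      qed
      have r1: "(t ^^ K) x = s x" for x unfolding s_def by simp
      have r2: "(t2 ^^ K) x = s x" for x
        using t2pow[of K x] scomm'[of x] actinv2[OF h] unfolding s_def by simp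
      obtain x0 where x0: "x0 \<in> ax.M" using ax.M_ne by blast
      have e1: "t x0 = t2 x0" using ax.roots_agree[OF tcomm t2comm K r1 r2 x0] .
      have e2: "t (ax.nx x0) = t2 (ax.nx x0)" using ax.roots_agree[OF tcomm t2comm K r1 r2 ax.nx_M[OF x0]] .
      define c where "c = h \<otimes> Phi (inv h)"
      have cc: "c \<in> carrier G" unfolding c_def using h hi phic by simp
      have t2c: "t2 z = act c (t z)" for z
        unfolding t2_def c_def using teq[OF hi, of z] actc[OF h phic[OF hi], of "t z"] by simp
      have ee0: "E x0 (ax.nx x0)" by (rule ax.nx_edge)
      have ee: "E (t x0) (t (ax.nx x0))" using tiso ee0 unfolding tree_isometry_def by blast
      have f1: "act c (t x0) = t x0" using e1 t2c[of x0] by simp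
      have f2: "act c (t (ax.nx x0)) = t (ax.nx x0)" using e2 t2c[of "ax.nx x0"] by simp
      have "c = \<one>" by (rule estab[OF ee cc f1 f2])
      then have c1: "h \<otimes> inv (Phi h) = \<one>" unfolding c_def using phiinv[OF h] by simp
      have "(h \<otimes> inv (Phi h)) \<otimes> Phi h = h" using h phic[OF h] by (simp add: m_assoc)
      then show ?thesis using c1 phic[OF h] by simp
    qed
  qed
  show ?thesis
    unfolding neat_def
  proof (intro ballI allI impI)
    fix h k assume h: "h \<in> carrier G" and hk: "k \<noteq> 0 \<and> aut_pow G Phi k h = h"
    show "Phi h = h"
    proof (cases "0 < k")
      case True
      then have "(Phi ^^ nat k) h = h" using hk unfolding aut_pow_def by simp
      moreover have "0 < nat k" using True by simp
      ultimately show ?thesis using core[OF h] by blast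
    next
      case False
      define n where "n = nat (- k)"
      define psi where "psi = inv_into (carrier G) Phi"
      have n: "0 < n" using False hk unfolding n_def by simp
      have kn: "\<not> 0 \<le> k" using False hk by simp
      have pn: "(psi ^^ n) h = h" using hk kn unfolding aut_pow_def psi_def n_def by simp
      have psic: "x \<in> carrier G \<Longrightarrow> psi x \<in> carrier G" for x
        unfolding psi_def by (rule inv_into_into) (use phibij in \<open>simp add: bij_betw_def\<close>)
      have phipsi: "x \<in> carrier G \<Longrightarrow> Phi (psi x) = x" for x
        unfolding psi_def by (rule bij_betw_inv_into_right[OF phibij])
      have psipc: "x \<in> carrier G \<Longrightarrow> (psi ^^ m) x \<in> carrier G" for x m
        by (induction m) (auto simp: psic)
      have pp: "x \<in> carrier G \<Longrightarrow> (Phi ^^ m) ((psi ^^ m) x) = x" for x m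
      proof (induction m)
        case 0 then show ?case by simp
      next
        case (Suc m)
        have a1: "(Phi ^^ Suc m) y = (Phi ^^ m) (Phi y)" for y by (simp only: funpow_Suc_right o_apply)
        have "(Phi ^^ Suc m) ((psi ^^ Suc m) x) = (Phi ^^ m) (Phi (psi ((psi ^^ m) x)))"
          by (simp only: a1) simp
        also have "\<dots> = (Phi ^^ m) ((psi ^^ m) x)" using phipsi psipc Suc.prems by simp
        finally show ?case using Suc by simp
      qed
      have "(Phi ^^ n) h = h" using pp[OF h, of n] pn by simp
      then show ?thesis using core[OF h n] by simp
    qed
  qed
qed

end

theorem proposition7p1:
  fixes G :: "('g, 'b) monoid_scheme"
    and act :: "'g \<Rightarrow> 'v \<Rightarrow> 'v"
    and E :: "'v \<Rightarrow> 'v \<Rightarrow> bool"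
    and Phi :: "'g \<Rightarrow> 'g"
    and t :: "'v \<Rightarrow> 'v"
  assumes "group G"
    and "torsion_free G"
    and "simplicial_tree E"
    and "group_action G UNIV act"
    and "\<And>g. g \<in> carrier G \<Longrightarrow> tree_isometry E (act g)"
    and "trivial_edge_stabilizers G act E"
    and "Phi \<in> iso G G"
    and "tree_isometry E t"
    and "\<And>g x. g \<in> carrier G \<Longrightarrow> t (act g x) = act (Phi g) (t x)"
    and "\<And>u v. E u v \<Longrightarrow> \<exists>g\<in>carrier G. t u = act g u \<and> t v = act g v"
    and "\<And>v. t v = v \<Longrightarrow> neat (G\<lparr>carrier := stabilizer G act v\<rparr>) Phi"
  shows "neat G Phi"
proof -
  interpret grp: group G by (rule assms(1))
  have "P71 G E act Phi t"
    unfolding P71_def P71_axioms_def stree_def using assms by blast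
  then interpret P71 G E act Phi t .
  show ?thesis by (rule main)
qed


end
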